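(* Let $r=\max\{\eta_a,\eta_b\}$, $\alpha=\max\{\sigma_{\max}(U):U\in B(V_*,r)\}$, $L=6\alpha^2\max\{|\lambda_1|,|\lambda_{\max}|\}$ and $\hat L=\frac{2L}{3\alpha}$. Then for all $U_i,U_j\in B(V_*,r)$, $$\|\mathcal{A}_{U_i}U_i-\mathcal{A}_{U_j}U_j\|\leqslant L\|U_i-U_j\|,\qquad \|\mathcal{A}_{U_i}-\mathcal{A}_{U_j}\|\leqslant\hat L\|U_i-U_j\|.$$
   Context: Let $\mathcal{V}^{N_g}$ be a real Hilbert space of finite dimension $N_g$ with inner product $(\cdot,\cdot)$, and let $H:\mathcal{V}^{N_g}\to\mathcal{V}^{N_g}$ be a self-adjoint linear operator with eigenvalues $\lambda_1\leqslant\cdots\leqslant\lambda_{N_g}$, $\lambda_{\max}=\lambda_{N_g}$, $\lambda_1<0$. Fix $N<N_g$ with $\lambda_N<\lambda_{N+1}$. Elements of $(\mathcal{V}^{N_g})^N$ are written $U=(u_1,\dots,u_N)$; $U^\top V=((u_i,v_j))_{i,j=1}^N$; for a real $N\times N$ matrix $A=(a_{kj})$, $UA$ has $j$-th component $\sum_k a_{kj}u_k$; $HU=(Hu_1,\dots,Hu_N)$; $\|U\|=\operatorname{tr}(U^\top U)^{1/2}$; $\sigma_{\max}(U)=\sqrt{\lambda_{\max}(U^\top U)}$. Set $\nabla E(U)=HU$. For $U$, $\mathcal{A}_U=\nabla E(U)U^\top-U\nabla E(U)^\top$ is the linear operator on $\mathcal{V}^{N_g}$ given by $\mathcal{A}_Uw=\sum_{i=1}^N\big(Hu_i\,(u_i,w)-u_i\,(Hu_i,w)\big)$,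 applied componentwise to elements of $(\mathcal{V}^{N_g})^N$; for linear operators on $\mathcal{V}^{N_g}$, $\|\cdot\|$ is the Hilbert–Schmidt norm (so $\|\mathcal{A}_U\|^2=-\operatorname{tr}(\mathcal{A}_U^2)$). Let $V_*$ satisfy $V_*^\top V_*=I_N$, $HV_*=V_*\operatorname{diag}(\lambda_1,\dots,\lambda_N)$. $\mathcal{O}^N$ denotes the $N\times N$ orthogonal matrices, $\operatorname{dist}([U],[V_*])=\inf_{Q\in\mathcal{O}^N}\|UQ-V_*\|$, $B(U,\eta)=\{W:\|W-U\|\leqslant\eta\}$, $B([V_*],\eta)=\{W:\operatorname{dist}([W],[V_*])\leqslant\eta\}$. Fix constants $\eta_a,\eta_b,\delta^*>0$ such that (as asserted in the paper) there is a unique function $\hat g:B(V_*,\eta_a)\times[0,\delta^*]\to B(V_*,\eta_b)$ with $\hat g(U,s)-U=-s\,\mathcal{A}_{\frac{\hat g(U,s)+U}{2}}\frac{\hat g(U,s)+U}{2}$, and a unique function $g:B([V_*],\eta_a)\times[0,\delta^*]\to B([V_*],\eta_b)$ with $g(U,s)=\hat g(U,s)-s\nabla E(\hat g(U,s))(I_N-\hat g(U,s)^\top\hat g(U,s))$. *)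

theory Defs
  imports "HOL-Analysis.Analysis"
begin

text \<open>Elements of (V^{N_g})^N are represented as functions nat => 'v; only the
components with index < N matter.\<close>

definition tnorm :: "nat \<Rightarrow> (nat \<Rightarrow> 'v::euclidean_space) \<Rightarrow> real" where
  "tnorm N U = sqrt (\<Sum>i<N. (norm (U i))\<^sup>2)"

definition gram :: "(nat \<Rightarrow> 'v::euclidean_space) \<Rightarrow> nat \<Rightarrow> nat \<Rightarrow> real" where
  "gram U i j = U i \<bullet> U j"

definition mat_lambda_max :: "nat \<Rightarrow> (nat \<Rightarrow> nat \<Rightarrow> real) \<Rightarrow> real" where
  "mat_lambda_max N G = Max {\<mu>. \<exists>x::nat \<Rightarrow> real. (\<exists>k<N. x k \<noteq> 0) \<and>
      (\<forall>i<N. (\<Sum>j<N. G i j * x j) = \<mu> * x i)}"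

definition sigma_max :: "nat \<Rightarrow> (nat \<Rightarrow> 'v::euclidean_space) \<Rightarrow> real" where
  "sigma_max N U = sqrt (mat_lambda_max N (gram U))"

definition opA :: "('v::euclidean_space \<Rightarrow> 'v) \<Rightarrow> nat \<Rightarrow> (nat \<Rightarrow> 'v) \<Rightarrow> 'v \<Rightarrow> 'v" where
  "opA H N U w = (\<Sum>i<N. (U i \<bullet> w) *\<^sub>R H (U i) - (H (U i) \<bullet> w) *\<^sub>R U i)"

definition hs_norm :: "('v::euclidean_space \<Rightarrow> 'v) \<Rightarrow> real" where
  "hs_norm A = sqrt (\<Sum>b\<in>Basis. (norm (A b))\<^sup>2)"

end

theory Submission
  imports Defs "HOL-Analysis.Analysis"
begin

definition lc :: "nat \<Rightarrow> (nat \<Rightarrow> 'v::euclidean_space) \<Rightarrow> (nat \<Rightarrow> real) \<Rightarrow> 'v" where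
  "lc N U c = (\<Sum>i<N. c i *\<^sub>R U i)"
definition sb :: "nat \<Rightarrow> (nat \<Rightarrow> 'v::euclidean_space) \<Rightarrow> real \<Rightarrow> bool" where
  "sb N U s \<longleftrightarrow> (\<forall>c. norm (lc N U c) \<le> s * sqrt (\<Sum>i<N. (c i)\<^sup>2))"
definition cob :: "'k set \<Rightarrow> ('k \<Rightarrow> 'v::euclidean_space) \<Rightarrow> real \<Rightarrow> bool" where
  "cob K B s \<longleftrightarrow> (\<forall>v. (\<Sum>k\<in>K. (B k \<bullet> v)\<^sup>2) \<le> s\<^sup>2 * (norm v)\<^sup>2)"
definition opb :: "('v::euclidean_space \<Rightarrow> 'v) \<Rightarrow> real \<Rightarrow> bool" where
  "opb L m \<longleftrightarrow> linear L \<and> (\<forall>x y. L x \<bullet> y = x \<bullet> L y) \<and> (\<forall>x. norm (L x) \<le> m * norm x) \<and> 0 \<le> m"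

lemma norm_sq_basis: "(norm x)\<^sup>2 = (\<Sum>b\<in>Basis. (x \<bullet> b)\<^sup>2)" for x :: "'v::euclidean_space"
proof -
  have "(norm x)\<^sup>2 = x \<bullet> x" by (simp add: power2_norm_eq_inner)
  also have "\<dots> = (\<Sum>b\<in>Basis. (x \<bullet> b)\<^sup>2)" by (simp add: euclidean_inner[of x x] power2_eq_square)
  finally show ?thesis .
qed

lemma lc_inner: "lc N U c \<bullet> v = (\<Sum>i<N. c i * (U i \<bullet> v))"
  by (simp add: lc_def inner_sum_left)

lemma opb_id: "opb (\<lambda>x. x) 1"
  by (simp add: opb_def linear_id[unfolded id_def])

lemma opb_lc: assumes "opb L m" shows "L (lc N U c) = (\<Sum>i<N. c i *\<^sub>R L (U i))"
proof -
  have "linear L" using assms by (simp add: opb_def)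
  then show ?thesis unfolding lc_def by (simp add: linear_sum linear_scale)
qed

lemma sqrt_sq_le: fixes q s t :: real assumes "q\<^sup>2 \<le> s * q * t" "0 \<le> q" "0 \<le> s" "0 \<le> t" shows "q \<le> s * t"
proof (cases "q = 0")
  case True then show ?thesis using assms(3,4) by (simp add: zero_le_mult_iff)
next
  case False
  then have "q > 0" using assms by simp
  then show ?thesis using assms by (simp add: power2_eq_square mult.commute mult.left_commute)
qed

lemma sb_cob: assumes "sb N U s" "0 \<le> s" shows "cob {..<N} U s"
  unfolding cob_def
proof
  fix v
  define c where "c i = U i \<bullet> v" for i
  have e: "lc N U c \<bullet> v = (\<Sum>i<N. (c i)\<^sup>2)" by (simp add: lc_inner c_def power2_eq_square)
  define q where "q = sqrt (\<Sum>i<N. (c i)\<^sup>2)"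
  have q0: "0 \<le> q" by (simp add: q_def sum_nonneg)
  have "q\<^sup>2 = lc N U c \<bullet> v" using e by (simp add: q_def sum_nonneg)
  also have "\<dots> \<le> norm (lc N U c) * norm v" by (rule norm_cauchy_schwarz)
  also have "\<dots> \<le> s * q * norm v" using assms(1) by (simp add: sb_def q_def mult_right_mono)
  finally have "q\<^sup>2 \<le> s * q * norm v" .
  then have "q \<le> s * norm v" using sqrt_sq_le[of q s "norm v"] q0 assms(2) by simp
  then have "q\<^sup>2 \<le> (s * norm v)\<^sup>2" using q0 by (simp add: power_mono)
  then show "(\<Sum>k<N. (U k \<bullet> v)\<^sup>2) \<le> s\<^sup>2 * (norm v)\<^sup>2"
    by (simp add: q_def c_def sum_nonneg power_mult_distrib)
qed

lemma fro_bound: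
  assumes "\<forall>k\<in>K. norm (Z k) \<le> c * norm (D k)" "0 \<le> c"
  shows "sqrt (\<Sum>k\<in>K. (norm (Z k))\<^sup>2) \<le> c * sqrt (\<Sum>k\<in>K. (norm (D k))\<^sup>2)"
proof -
  have "(\<Sum>k\<in>K. (norm (Z k))\<^sup>2) \<le> (\<Sum>k\<in>K. c\<^sup>2 * (norm (D k))\<^sup>2)"
    by (rule sum_mono) (metis assms norm_ge_zero power_mono power_mult_distrib)
  also have "\<dots> = c\<^sup>2 * (\<Sum>k\<in>K. (norm (D k))\<^sup>2)" by (simp add: sum_distrib_left)
  finally have "sqrt (\<Sum>k\<in>K. (norm (Z k))\<^sup>2) \<le> sqrt (c\<^sup>2 * (\<Sum>k\<in>K. (norm (D k))\<^sup>2))"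
    using real_sqrt_le_mono by blast
  also have "\<dots> = c * sqrt (\<Sum>k\<in>K. (norm (D k))\<^sup>2)" using assms(2) by (simp add: real_sqrt_mult)
  finally show ?thesis .
qed

lemma cob_sqrt: assumes "cob K B s" "0 \<le> s" shows "sqrt (\<Sum>k\<in>K. (B k \<bullet> v)\<^sup>2) \<le> s * norm v"
proof -
  have "sqrt (\<Sum>k\<in>K. (B k \<bullet> v)\<^sup>2) \<le> sqrt ((s * norm v)\<^sup>2)"
    using assms(1) by (simp add: cob_def power_mult_distrib del: real_sqrt_abs)
  then show ?thesis using assms(2) by simp
qed

lemma T3:
  assumes L: "opb L mL" and L': "opb L' mL'" and A: "sb N A aA" and C: "sb N C aC"
    and "0 \<le> aA" "0 \<le> aC"
  shows "norm (\<Sum>i<N. (A i \<bullet> L d) *\<^sub>R L' (C i)) \<le> mL' * aC * aA * mL * norm d"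
proof -
  have mL': "0 \<le> mL'" using L' by (simp add: opb_def)
  have "(\<Sum>i<N. (A i \<bullet> L d) *\<^sub>R L' (C i)) = L' (lc N C (\<lambda>i. A i \<bullet> L d))"
    using opb_lc[OF L'] by simp
  then have "norm (\<Sum>i<N. (A i \<bullet> L d) *\<^sub>R L' (C i)) \<le> mL' * norm (lc N C (\<lambda>i. A i \<bullet> L d))"
    using L' by (simp add: opb_def)
  also have "\<dots> \<le> mL' * (aC * sqrt (\<Sum>i<N. (A i \<bullet> L d)\<^sup>2))"
    using C mL' by (simp add: sb_def mult_left_mono)
  also have "\<dots> \<le> mL' * (aC * (aA * norm (L d)))"
    using cob_sqrt[OF sb_cob[OF A \<open>0 \<le> aA\<close>] \<open>0 \<le> aA\<close>, of "L d"] mL' \<open>0 \<le> aC\<close>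
    by (simp add: mult_left_mono)
  also have "\<dots> \<le> mL' * (aC * (aA * (mL * norm d)))"
    using L mL' \<open>0 \<le> aC\<close> \<open>0 \<le> aA\<close> by (simp add: opb_def mult_left_mono)
  finally show ?thesis by (simp add: mult_ac)
qed


lemma T2:
  assumes L: "opb L mL" and L': "opb L' mL'" and A: "sb N A aA" and "0 \<le> aA"
    and B: "cob K B \<beta>" and "0 \<le> \<beta>"
  shows "(\<Sum>k\<in>K. (norm (\<Sum>i<N. (D i \<bullet> L (B k)) *\<^sub>R L' (A i)))\<^sup>2)
     \<le> (mL' * aA * \<beta> * mL)\<^sup>2 * (\<Sum>i<N. (norm (D i))\<^sup>2)"
proof -
  have mL': "0 \<le> mL'" and mL: "0 \<le> mL" using L L' by (auto simp: opb_def)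
  have sa: "\<And>x y. L x \<bullet> y = x \<bullet> L y" using L by (simp add: opb_def)
  have sym2: "\<And>x y. x \<bullet> L y = y \<bullet> L x" by (metis sa inner_commute)
  have step: "(norm (\<Sum>i<N. (D i \<bullet> L (B k)) *\<^sub>R L' (A i)))\<^sup>2
      \<le> (mL' * aA)\<^sup>2 * (\<Sum>i<N. (D i \<bullet> L (B k))\<^sup>2)" for k
  proof -
    have "(\<Sum>i<N. (D i \<bullet> L (B k)) *\<^sub>R L' (A i)) = L' (lc N A (\<lambda>i. D i \<bullet> L (B k)))"
      using opb_lc[OF L'] by simp
    then have "norm (\<Sum>i<N. (D i \<bullet> L (B k)) *\<^sub>R L' (A i)) \<le> mL' * norm (lc N A (\<lambda>i. D i \<bullet> L (B k)))"
      using L' by (simp add: opb_def)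
    also have "\<dots> \<le> mL' * (aA * sqrt (\<Sum>i<N. (D i \<bullet> L (B k))\<^sup>2))"
      using A mL' by (simp add: sb_def mult_left_mono)
    finally have "(norm (\<Sum>i<N. (D i \<bullet> L (B k)) *\<^sub>R L' (A i)))\<^sup>2
        \<le> (mL' * (aA * sqrt (\<Sum>i<N. (D i \<bullet> L (B k))\<^sup>2)))\<^sup>2"
      by (simp add: power_mono)
    also have "\<dots> = (mL' * aA)\<^sup>2 * (\<Sum>i<N. (D i \<bullet> L (B k))\<^sup>2)"
      by (simp add: power_mult_distrib sum_nonneg)
    finally show ?thesis .
  qed
  have "(\<Sum>k\<in>K. (norm (\<Sum>i<N. (D i \<bullet> L (B k)) *\<^sub>R L' (A i)))\<^sup>2)
      \<le> (\<Sum>k\<in>K. (mL' * aA)\<^sup>2 * (\<Sum>i<N. (D i \<bullet> L (B k))\<^sup>2))"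
    by (rule sum_mono) (rule step)
  also have "\<dots> = (mL' * aA)\<^sup>2 * (\<Sum>i<N. \<Sum>k\<in>K. (B k \<bullet> L (D i))\<^sup>2)"
    by (simp add: sum_distrib_left sum.swap[of _ K] sym2)
  also have "\<dots> \<le> (mL' * aA)\<^sup>2 * (\<Sum>i<N. \<beta>\<^sup>2 * (mL * norm (D i))\<^sup>2)"
  proof (rule mult_left_mono[OF sum_mono])
    fix i
    have "(\<Sum>k\<in>K. (B k \<bullet> L (D i))\<^sup>2) \<le> \<beta>\<^sup>2 * (norm (L (D i)))\<^sup>2" using B by (simp add: cob_def)
    also have "\<dots> \<le> \<beta>\<^sup>2 * (mL * norm (D i))\<^sup>2"
      using L by (intro mult_left_mono power_mono) (auto simp: opb_def)
    finally show "(\<Sum>k\<in>K. (B k \<bullet> L (D i))\<^sup>2) \<le> \<beta>\<^sup>2 * (mL * norm (D i))\<^sup>2" .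
  qed simp
  also have "\<dots> = (mL' * aA * \<beta> * mL)\<^sup>2 * (\<Sum>i<N. (norm (D i))\<^sup>2)"
    by (simp add: sum_distrib_left power_mult_distrib mult_ac)
  finally show ?thesis .
qed

lemma T1:
  assumes L: "opb L mL" and L': "opb L' mL'" and A: "sb N A aA" and "0 \<le> aA"
    and B: "cob K B \<beta>" and "0 \<le> \<beta>"
  shows "(\<Sum>k\<in>K. (norm (\<Sum>i<N. (A i \<bullet> L (B k)) *\<^sub>R L' (D i)))\<^sup>2)
     \<le> (mL' * aA * \<beta> * mL)\<^sup>2 * (\<Sum>i<N. (norm (D i))\<^sup>2)"
proof -
  have mL': "0 \<le> mL'" and mL: "0 \<le> mL" using L L' by (auto simp: opb_def)
  have sa: "\<And>x y. L x \<bullet> y = x \<bullet> L y" using L by (simp add: opb_def)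
  have sym2: "\<And>x y. x \<bullet> L y = y \<bullet> L x" by (metis sa inner_commute)
  define g where "g k i = A i \<bullet> L (B k)" for k i
  define \<delta> where "\<delta> b i = D i \<bullet> b" for b i
  have key: "lc N D (g k) \<bullet> b = B k \<bullet> L (lc N A (\<delta> b))" for k b
  proof -
    have "lc N D (g k) \<bullet> b = (\<Sum>i<N. g k i * (D i \<bullet> b))" by (simp add: lc_inner)
    also have "\<dots> = (\<Sum>i<N. \<delta> b i * (B k \<bullet> L (A i)))"
      by (simp add: g_def \<delta>_def sym2[of "A _"] mult.commute)
    also have "\<dots> = B k \<bullet> L (lc N A (\<delta> b))" by (simp add: opb_lc[OF L] inner_sum_right)
    finally show ?thesis .
  qed
  have step: "(norm (\<Sum>i<N. (A i \<bullet> L (B k)) *\<^sub>R L' (D i)))\<^sup>2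
      \<le> mL'\<^sup>2 * (\<Sum>b\<in>Basis. (B k \<bullet> L (lc N A (\<delta> b)))\<^sup>2)" for k
  proof -
    have "(\<Sum>i<N. (A i \<bullet> L (B k)) *\<^sub>R L' (D i)) = L' (lc N D (g k))"
      using opb_lc[OF L'] by (simp add: g_def)
    then have "norm (\<Sum>i<N. (A i \<bullet> L (B k)) *\<^sub>R L' (D i)) \<le> mL' * norm (lc N D (g k))"
      using L' by (simp add: opb_def)
    then have "(norm (\<Sum>i<N. (A i \<bullet> L (B k)) *\<^sub>R L' (D i)))\<^sup>2 \<le> (mL' * norm (lc N D (g k)))\<^sup>2"
      by (simp add: power_mono)
    also have "\<dots> = mL'\<^sup>2 * (\<Sum>b\<in>Basis. (lc N D (g k) \<bullet> b)\<^sup>2)"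
      by (simp add: power_mult_distrib norm_sq_basis)
    finally show ?thesis by (simp add: key)
  qed
  have "(\<Sum>k\<in>K. (norm (\<Sum>i<N. (A i \<bullet> L (B k)) *\<^sub>R L' (D i)))\<^sup>2)
      \<le> (\<Sum>k\<in>K. mL'\<^sup>2 * (\<Sum>b\<in>Basis. (B k \<bullet> L (lc N A (\<delta> b)))\<^sup>2))"
    by (rule sum_mono) (rule step)
  also have "\<dots> = mL'\<^sup>2 * (\<Sum>b\<in>Basis. \<Sum>k\<in>K. (B k \<bullet> L (lc N A (\<delta> b)))\<^sup>2)"
    by (simp add: sum_distrib_left sum.swap[of _ K])
  also have "\<dots> \<le> mL'\<^sup>2 * (\<Sum>b\<in>Basis. \<beta>\<^sup>2 * (mL * (aA * sqrt (\<Sum>i<N. (\<delta> b i)\<^sup>2)))\<^sup>2)"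
  proof (rule mult_left_mono[OF sum_mono])
    fix b
    have "(\<Sum>k\<in>K. (B k \<bullet> L (lc N A (\<delta> b)))\<^sup>2) \<le> \<beta>\<^sup>2 * (norm (L (lc N A (\<delta> b))))\<^sup>2"
      using B by (simp add: cob_def)
    also have "\<dots> \<le> \<beta>\<^sup>2 * (mL * (aA * sqrt (\<Sum>i<N. (\<delta> b i)\<^sup>2)))\<^sup>2"
    proof (intro mult_left_mono power_mono)
      have "norm (L (lc N A (\<delta> b))) \<le> mL * norm (lc N A (\<delta> b))" using L by (simp add: opb_def)
      also have "\<dots> \<le> mL * (aA * sqrt (\<Sum>i<N. (\<delta> b i)\<^sup>2))" using A mL by (simp add: sb_def mult_left_mono)
      finally show "norm (L (lc N A (\<delta> b))) \<le> mL * (aA * sqrt (\<Sum>i<N. (\<delta> b i)\<^sup>2))" .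
    qed auto
    finally show "(\<Sum>k\<in>K. (B k \<bullet> L (lc N A (\<delta> b)))\<^sup>2) \<le> \<beta>\<^sup>2 * (mL * (aA * sqrt (\<Sum>i<N. (\<delta> b i)\<^sup>2)))\<^sup>2" .
  qed simp
  also have "\<dots> = (mL' * aA * \<beta> * mL)\<^sup>2 * (\<Sum>b\<in>Basis. \<Sum>i<N. (\<delta> b i)\<^sup>2)"
    by (simp add: sum_distrib_left power_mult_distrib sum_nonneg mult_ac)
  also have "(\<Sum>b\<in>Basis. \<Sum>i<N. (\<delta> b i)\<^sup>2) = (\<Sum>i<N. (norm (D i))\<^sup>2)"
    by (simp add: \<delta>_def norm_sq_basis sum.swap[of _ Basis])
  finally show ?thesis .
qed


lemma quad_zero:
  fixes a b :: real
  assumes "\<And>t. 2 * t * a + t\<^sup>2 * b \<le> 0"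
  shows "a = 0"
proof (rule ccontr)
  assume "a \<noteq> 0"
  define c where "c = \<bar>b\<bar> + 1"
  have c: "c > 0" by (simp add: c_def add_pos_nonneg)
  have "2 * (a / c) * a + (a / c)\<^sup>2 * b \<le> 0" by (rule assms)
  then have "c\<^sup>2 * (2 * (a / c) * a + (a / c)\<^sup>2 * b) \<le> 0"
    by (simp add: mult_nonneg_nonpos)
  moreover have "c\<^sup>2 * (2 * (a / c) * a + (a / c)\<^sup>2 * b) = a\<^sup>2 * (2 * c + b)"
    using c by (simp add: field_simps power2_eq_square)
  ultimately have "a\<^sup>2 * (2 * c + b) \<le> 0" by simp
  moreover have "2 * c + b > 0" unfolding c_def by (cases "b \<ge> 0") auto
  moreover have "a\<^sup>2 > 0" using \<open>a \<noteq> 0\<close> by simp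
  ultimately show False by (metis mult_pos_pos not_le)
qed

lemma selfadj_ev_finite:
  fixes f :: "'v::euclidean_space \<Rightarrow> 'v"
  assumes sa: "\<And>x y. f x \<bullet> y = x \<bullet> f y"
  shows "finite {\<mu>. \<exists>w. w \<noteq> 0 \<and> f w = \<mu> *\<^sub>R w}"
proof -
  define Ev where "Ev = {\<mu>. \<exists>w. w \<noteq> 0 \<and> f w = \<mu> *\<^sub>R w}"
  define ev where "ev \<mu> = (SOME w. w \<noteq> 0 \<and> f w = \<mu> *\<^sub>R w)" for \<mu>
  have evp: "ev \<mu> \<noteq> 0 \<and> f (ev \<mu>) = \<mu> *\<^sub>R ev \<mu>" if "\<mu> \<in> Ev" for \<mu>
    using that unfolding Ev_def ev_def by (metis (mono_tags, lifting) mem_Collect_eq someI_ex)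
  have inj: "inj_on ev Ev"
  proof (rule inj_onI)
    fix \<mu> \<nu> assume m: "\<mu> \<in> Ev" "\<nu> \<in> Ev" "ev \<mu> = ev \<nu>"
    then have "\<mu> *\<^sub>R ev \<mu> = \<nu> *\<^sub>R ev \<mu>" using evp by metis
    then have "(\<mu> - \<nu>) *\<^sub>R ev \<mu> = 0" by (simp add: scaleR_diff_left)
    then show "\<mu> = \<nu>" using evp[OF m(1)] by simp
  qed
  have po: "pairwise orthogonal (ev ` Ev)"
  proof (clarsimp simp: pairwise_def)
    fix \<mu> \<nu> assume m: "\<mu> \<in> Ev" "\<nu> \<in> Ev" "ev \<mu> \<noteq> ev \<nu>"
    then have "\<mu> \<noteq> \<nu>" by auto
    have "\<mu> * (ev \<mu> \<bullet> ev \<nu>) = f (ev \<mu>) \<bullet> ev \<nu>" using evp[OF m(1)] by simp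
    also have "\<dots> = ev \<mu> \<bullet> f (ev \<nu>)" by (rule sa)
    also have "\<dots> = \<nu> * (ev \<mu> \<bullet> ev \<nu>)" using evp[OF m(2)] by simp
    finally have "(\<mu> - \<nu>) * (ev \<mu> \<bullet> ev \<nu>) = 0" by (simp add: left_diff_distrib)
    then show "orthogonal (ev \<mu>) (ev \<nu>)" using \<open>\<mu> \<noteq> \<nu>\<close> by (simp add: orthogonal_def)
  qed
  have "0 \<notin> ev ` Ev" using evp by auto
  then have "independent (ev ` Ev)" using po pairwise_orthogonal_independent by blast
  then have "finite (ev ` Ev)" using finiteI_independent by blast
  then have "finite Ev" using inj finite_imageD by blast
  then show ?thesis by (simp add: Ev_def)
qed


definition Sop :: "nat \<Rightarrow> (nat \<Rightarrow> 'v::euclidean_space) \<Rightarrow> 'v \<Rightarrow> 'v" where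
  "Sop N U w = lc N U (\<lambda>i. U i \<bullet> w)"

lemma Sop_inner: "Sop N U w \<bullet> v = (\<Sum>i<N. (U i \<bullet> w) * (U i \<bullet> v))"
  by (simp add: Sop_def lc_inner)

lemma Sop_sa: "Sop N U x \<bullet> y = x \<bullet> Sop N U y"
  by (simp add: Sop_inner inner_commute[of x] inner_commute[of y] mult.commute)

lemma lc_norm_sq: "(norm (lc N U x))\<^sup>2 = (\<Sum>i<N. x i * (U i \<bullet> lc N U x))"
  by (simp add: power2_norm_eq_inner lc_inner inner_commute)

lemma gram_lc: "(\<Sum>j<N. gram U i j * x j) = U i \<bullet> lc N U x"
  by (simp add: gram_def lc_def inner_sum_right mult.commute)

lemma eig_le:
  fixes U :: "nat \<Rightarrow> 'v::euclidean_space"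
  assumes "\<exists>k<N. x k \<noteq> 0" "\<forall>i<N. (\<Sum>j<N. gram U i j * x j) = \<mu> * x i"
  shows "\<mu> \<le> (\<Sum>i<N. (norm (U i))\<^sup>2)"
proof -
  define z where "z = lc N U x"
  have "(norm z)\<^sup>2 = (\<Sum>i<N. x i * (\<mu> * x i))"
    unfolding z_def lc_norm_sq using assms(2) gram_lc by (metis (no_types, lifting) lessThan_iff sum.cong)
  then have nz: "(norm z)\<^sup>2 = \<mu> * (\<Sum>i<N. (x i)\<^sup>2)"
    by (simp add: sum_distrib_left power2_eq_square mult_ac)
  have "norm z \<le> (\<Sum>i<N. \<bar>x i\<bar> * \<bar>norm (U i)\<bar>)"
    unfolding z_def lc_def by (rule order_trans[OF norm_sum]) simp
  also have "\<dots> \<le> L2_set x {..<N} * L2_set (\<lambda>i. norm (U i)) {..<N}" by (rule L2_set_mult_ineq)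
  finally have "(norm z)\<^sup>2 \<le> (L2_set x {..<N} * L2_set (\<lambda>i. norm (U i)) {..<N})\<^sup>2"
    by (simp add: power_mono)
  also have "\<dots> = (\<Sum>i<N. (x i)\<^sup>2) * (\<Sum>i<N. (norm (U i))\<^sup>2)"
    by (simp add: L2_set_def power_mult_distrib sum_nonneg)
  finally have "\<mu> * (\<Sum>i<N. (x i)\<^sup>2) \<le> (\<Sum>i<N. (norm (U i))\<^sup>2) * (\<Sum>i<N. (x i)\<^sup>2)"
    using nz by (simp add: mult.commute)
  moreover have "(\<Sum>i<N. (x i)\<^sup>2) > 0"
  proof -
    obtain k where "k < N" "x k \<noteq> 0" using assms(1) by blast
    then have "(x k)\<^sup>2 \<le> (\<Sum>i<N. (x i)\<^sup>2)"
      by (intro member_le_sum) auto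
    then show ?thesis using \<open>x k \<noteq> 0\<close> by (smt (verit) zero_less_power2)
  qed
  ultimately show ?thesis by simp
qed

lemma eset_finite:
  fixes U :: "nat \<Rightarrow> 'v::euclidean_space"
  shows "finite {\<mu>. \<exists>x::nat \<Rightarrow> real. (\<exists>k<N. x k \<noteq> 0) \<and>
      (\<forall>i<N. (\<Sum>j<N. gram U i j * x j) = \<mu> * x i)}" (is "finite ?E")
proof -
  have "?E \<subseteq> insert 0 {\<mu>. \<exists>w. w \<noteq> 0 \<and> Sop N U w = \<mu> *\<^sub>R w}"
  proof
    fix \<mu> assume "\<mu> \<in> ?E"
    then obtain x where x: "\<exists>k<N. x k \<noteq> 0" "\<forall>i<N. (\<Sum>j<N. gram U i j * x j) = \<mu> * x i" by blast
    show "\<mu> \<in> insert 0 {\<mu>. \<exists>w. w \<noteq> 0 \<and> Sop N U w = \<mu> *\<^sub>R w}"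
    proof (cases "\<mu> = 0")
      case False
      define z where "z = lc N U x"
      have ui: "\<forall>i<N. U i \<bullet> z = \<mu> * x i" using x(2) gram_lc z_def by metis
      have "(norm z)\<^sup>2 = (\<Sum>i<N. x i * (\<mu> * x i))"
        unfolding z_def lc_norm_sq using ui z_def by simp
      then have nz: "(norm z)\<^sup>2 = \<mu> * (\<Sum>i<N. (x i)\<^sup>2)"
        by (simp add: sum_distrib_left power2_eq_square mult_ac)
      have pos: "(\<Sum>i<N. (x i)\<^sup>2) > 0"
      proof -
        obtain k where "k < N" "x k \<noteq> 0" using x(1) by blast
        then have "(x k)\<^sup>2 \<le> (\<Sum>i<N. (x i)\<^sup>2)"
          by (intro member_le_sum) auto
        then show ?thesis using \<open>x k \<noteq> 0\<close> by (smt (verit) zero_less_power2)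
      qed
      have "z \<noteq> 0" using nz pos False by auto
      moreover have "Sop N U z = \<mu> *\<^sub>R z"
        using ui by (simp add: Sop_def z_def lc_def scaleR_sum_right)
      ultimately show ?thesis by blast
    qed simp
  qed
  moreover have "finite {\<mu>. \<exists>w. w \<noteq> 0 \<and> Sop N U w = \<mu> *\<^sub>R w}"
    by (rule selfadj_ev_finite) (rule Sop_sa)
  ultimately show ?thesis using finite_subset by blast
qed


definition eset :: "nat \<Rightarrow> (nat \<Rightarrow> 'v::euclidean_space) \<Rightarrow> real set" where
  "eset N U = {\<mu>. \<exists>x::nat \<Rightarrow> real. (\<exists>k<N. x k \<noteq> 0) \<and>
      (\<forall>i<N. (\<Sum>j<N. gram U i j * x j) = \<mu> * x i)}"

lemma sigma_eset: "sigma_max N U = sqrt (Max (eset N U))"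
  by (simp add: sigma_max_def mat_lambda_max_def eset_def)

definition phi :: "nat \<Rightarrow> (nat \<Rightarrow> 'v::euclidean_space) \<Rightarrow> 'v \<Rightarrow> real" where
  "phi N U w = (\<Sum>i<N. (U i \<bullet> w)\<^sup>2)"

lemma phi_scale: "phi N U (c *\<^sub>R w) = c\<^sup>2 * phi N U w"
  by (simp add: phi_def power_mult_distrib sum_distrib_left)

lemma phi_expand: "phi N U (w + t *\<^sub>R v) = phi N U w + 2 * t * (Sop N U w \<bullet> v) + t\<^sup>2 * phi N U v"
  by (simp add: phi_def Sop_inner inner_add_right power2_sum sum.distrib sum_distrib_left
      power_mult_distrib mult_ac)

lemma sb_max:
  fixes U :: "nat \<Rightarrow> 'v::euclidean_space"
  assumes N: "0 < N"
  shows "\<exists>\<mu>. \<mu> \<in> eset N U \<and> 0 \<le> \<mu> \<and> sb N U (sqrt \<mu>)"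
proof -
  have cont: "continuous_on (sphere 0 1) (phi N U)"
    unfolding phi_def by (intro continuous_intros)
  have ne: "sphere (0::'v) 1 \<noteq> {}"
  proof -
    obtain b :: 'v where "b \<in> Basis" using nonempty_Basis by blast
    then have "b \<in> sphere 0 1" by simp
    then show ?thesis by blast
  qed
  obtain w0 where w0: "w0 \<in> sphere 0 1" "\<forall>y\<in>sphere 0 1. phi N U y \<le> phi N U w0"
    using continuous_attains_sup[OF compact_sphere ne cont] by blast
  define \<mu> where "\<mu> = phi N U w0"
  have mu0: "0 \<le> \<mu>" by (simp add: \<mu>_def phi_def sum_nonneg)
  have nw0: "norm w0 = 1" using w0 by simp
  have glob: "phi N U v \<le> \<mu> * (norm v)\<^sup>2" for v
  proof (cases "v = 0")
    case True then show ?thesis by (simp add: phi_def)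
  next
    case False
    then have "(1 / norm v) *\<^sub>R v \<in> sphere 0 1" by simp
    then have "phi N U ((1 / norm v) *\<^sub>R v) \<le> \<mu>" using w0 \<mu>_def by blast
    then have "phi N U v / (norm v)\<^sup>2 \<le> \<mu>" by (simp add: phi_scale power_divide)
    then show ?thesis using False by (simp add: divide_le_eq mult.commute)
  qed
  have lag: "Sop N U w0 \<bullet> v = \<mu> * (w0 \<bullet> v)" for v
  proof -
    have "2 * t * (Sop N U w0 \<bullet> v - \<mu> * (w0 \<bullet> v)) + t\<^sup>2 * (phi N U v - \<mu> * (norm v)\<^sup>2) \<le> 0" for t
    proof -
      have "phi N U (w0 + t *\<^sub>R v) \<le> \<mu> * (norm (w0 + t *\<^sub>R v))\<^sup>2" by (rule glob)
      moreover have "(norm (w0 + t *\<^sub>R v))\<^sup>2 = 1 + 2 * t * (w0 \<bullet> v) + t\<^sup>2 * (norm v)\<^sup>2"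
      proof -
        have "(norm (w0 + t *\<^sub>R v))\<^sup>2 = (w0 + t *\<^sub>R v) \<bullet> (w0 + t *\<^sub>R v)" by (simp add: power2_norm_eq_inner)
        also have "\<dots> = w0 \<bullet> w0 + 2 * t * (w0 \<bullet> v) + t\<^sup>2 * (v \<bullet> v)"
          by (simp add: inner_add_left inner_add_right inner_commute power2_eq_square algebra_simps)
        also have "\<dots> = 1 + 2 * t * (w0 \<bullet> v) + t\<^sup>2 * (norm v)\<^sup>2"
          using nw0 by (simp add: dot_square_norm)
        finally show ?thesis .
      qed
      ultimately show ?thesis by (simp add: phi_expand \<mu>_def algebra_simps)
    qed
    then have "Sop N U w0 \<bullet> v - \<mu> * (w0 \<bullet> v) = 0" by (rule quad_zero)
    then show ?thesis by simp
  qed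
  have Sw0: "Sop N U w0 = \<mu> *\<^sub>R w0"
  proof -
    have "(Sop N U w0 - \<mu> *\<^sub>R w0) \<bullet> (Sop N U w0 - \<mu> *\<^sub>R w0) = 0"
      by (simp add: inner_diff_left lag)
    then show ?thesis by simp
  qed
  have mem: "\<mu> \<in> eset N U"
  proof (cases "\<mu> = 0")
    case True
    have z: "U i \<bullet> v = 0" if "i < N" for i v
    proof -
      have "(U i \<bullet> v)\<^sup>2 \<le> phi N U v" unfolding phi_def
        by (rule member_le_sum[where f = "\<lambda>i. (U i \<bullet> v)\<^sup>2"]) (use that in auto)
      also have "\<dots> \<le> 0" using glob[of v] True by simp
      finally show ?thesis by simp
    qed
    show ?thesis unfolding eset_def
      by (rule CollectI, rule exI[of _ "\<lambda>_. 1"]) (use N True z in \<open>auto simp: gram_def\<close>)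
  next
    case False
    define x where "x i = U i \<bullet> w0" for i
    have ev: "\<forall>i<N. (\<Sum>j<N. gram U i j * x j) = \<mu> * x i"
    proof -
      have lx: "lc N U x = \<mu> *\<^sub>R w0" using Sw0 by (simp add: Sop_def x_def[abs_def])
      show ?thesis
      proof (intro allI impI)
        fix i assume "i < N"
        have "(\<Sum>j<N. gram U i j * x j) = U i \<bullet> lc N U x" by (rule gram_lc)
        also have "\<dots> = \<mu> * (U i \<bullet> w0)" by (simp add: lx)
        finally show "(\<Sum>j<N. gram U i j * x j) = \<mu> * x i" by (simp add: x_def)
      qed
    qed
    have "(\<Sum>i<N. (x i)\<^sup>2) = \<mu>" by (simp add: x_def \<mu>_def phi_def)
    then have "\<exists>k<N. x k \<noteq> 0"
    proof (rule contrapos_pp)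
      assume "\<not> (\<exists>k<N. x k \<noteq> 0)"
      then have "(\<Sum>i<N. (x i)\<^sup>2) = 0" by simp
      then show "(\<Sum>i<N. (x i)\<^sup>2) \<noteq> \<mu>" using False by simp
    qed
    then show ?thesis unfolding eset_def using ev by blast
  qed
  have "sb N U (sqrt \<mu>)" unfolding sb_def
  proof
    fix c
    define z where "z = lc N U c"
    have "(norm z)\<^sup>2 = (\<Sum>i<N. c i * (U i \<bullet> z))" unfolding z_def by (rule lc_norm_sq)
    also have "\<dots> \<le> (\<Sum>i<N. \<bar>c i\<bar> * \<bar>U i \<bullet> z\<bar>)" by (rule sum_mono) (simp add: abs_mult[symmetric])
    also have "\<dots> \<le> L2_set c {..<N} * L2_set (\<lambda>i. U i \<bullet> z) {..<N}" by (rule L2_set_mult_ineq)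
    finally have h1: "(norm z)\<^sup>2 \<le> L2_set c {..<N} * L2_set (\<lambda>i. U i \<bullet> z) {..<N}" .
    have "L2_set (\<lambda>i. U i \<bullet> z) {..<N} \<le> sqrt \<mu> * norm z"
    proof -
      have "L2_set (\<lambda>i. U i \<bullet> z) {..<N} = sqrt (phi N U z)" by (simp add: L2_set_def phi_def)
      also have "sqrt (phi N U z) \<le> sqrt \<mu> * norm z"
        using real_sqrt_le_mono[OF glob[of z]] by (simp add: real_sqrt_mult)
      finally show ?thesis .
    qed
    then have "L2_set c {..<N} * L2_set (\<lambda>i. U i \<bullet> z) {..<N} \<le> L2_set c {..<N} * (sqrt \<mu> * norm z)"
      by (simp add: mult_left_mono L2_set_nonneg)
    with h1 have "(norm z)\<^sup>2 \<le> sqrt \<mu> * norm z * L2_set c {..<N}" by (simp add: mult_ac)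
    then have "norm z \<le> sqrt \<mu> * L2_set c {..<N}"
      by (rule sqrt_sq_le) (simp_all add: L2_set_nonneg mu0)
    then show "norm (lc N U c) \<le> sqrt \<mu> * sqrt (\<Sum>i<N. (c i)\<^sup>2)" by (simp add: z_def L2_set_def)
  qed
  then show ?thesis using mem mu0 by blast
qed


lemma sb_mono: "sb N U s \<Longrightarrow> s \<le> s' \<Longrightarrow> sb N U s'"
  unfolding sb_def by (meson mult_right_mono order_trans real_sqrt_ge_zero sum_nonneg zero_le_power2)

lemma sigma_props:
  fixes U :: "nat \<Rightarrow> 'v::euclidean_space"
  assumes N: "0 < N"
  shows "sb N U (sigma_max N U)" "sigma_max N U \<le> tnorm N U"
proof -
  obtain \<mu> where m: "\<mu> \<in> eset N U" "0 \<le> \<mu>" "sb N U (sqrt \<mu>)" using sb_max[OF N] by blast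
  have fin: "finite (eset N U)" using eset_finite[of N U] by (simp add: eset_def)
  have "\<mu> \<le> Max (eset N U)" using fin m(1) by simp
  then have "sqrt \<mu> \<le> sqrt (Max (eset N U))" by simp
  then show "sb N U (sigma_max N U)" using sb_mono[OF m(3)] by (simp add: sigma_eset)
  have "Max (eset N U) \<in> eset N U" using fin m(1) by (metis Max_in empty_iff)
  then have "Max (eset N U) \<le> (\<Sum>i<N. (norm (U i))\<^sup>2)"
    unfolding eset_def using eig_le by blast
  then show "sigma_max N U \<le> tnorm N U" by (simp add: sigma_eset tnorm_def)
qed

lemma orth_norm_sq:
  fixes e :: "nat \<Rightarrow> 'v::euclidean_space"
  assumes "\<And>i j. i < n \<Longrightarrow> j < n \<Longrightarrow> e i \<bullet> e j = (if i = j then 1 else 0)"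
  shows "(norm (\<Sum>i<n. c i *\<^sub>R e i))\<^sup>2 = (\<Sum>i<n. (c i)\<^sup>2)"
proof -
  have "(norm (\<Sum>i<n. c i *\<^sub>R e i))\<^sup>2 = (\<Sum>i<n. c i *\<^sub>R e i) \<bullet> (\<Sum>i<n. c i *\<^sub>R e i)"
    by (simp add: power2_norm_eq_inner)
  also have "\<dots> = (\<Sum>i<n. \<Sum>j<n. c i * c j * (e j \<bullet> e i))"
    by (simp add: inner_sum_left inner_sum_right sum_distrib_left mult_ac)
  also have "\<dots> = (\<Sum>i<n. \<Sum>j<n. if i = j then c i * c j else 0)"
    by (intro sum.cong refl) (simp add: assms)
  also have "\<dots> = (\<Sum>i<n. (c i)\<^sup>2)" by (simp add: power2_eq_square)
  finally show ?thesis .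
qed

lemma opb_H:
  fixes H :: "'v::euclidean_space \<Rightarrow> 'v" and lam :: "nat \<Rightarrow> real" and e :: "nat \<Rightarrow> 'v"
  assumes lin: "linear H"
    and selfadj: "\<And>x y. H x \<bullet> y = x \<bullet> H y"
    and eig_basis: "\<And>i j. i < DIM('v) \<Longrightarrow> j < DIM('v) \<Longrightarrow> e i \<bullet> e j = (if i = j then 1 else 0)"
    and eig_eq: "\<And>i. i < DIM('v) \<Longrightarrow> H (e i) = lam i *\<^sub>R e i"
    and sorted: "\<And>i j. i \<le> j \<Longrightarrow> j < DIM('v) \<Longrightarrow> lam i \<le> lam j"
  shows "opb H (max \<bar>lam 0\<bar> \<bar>lam (DIM('v) - 1)\<bar>)"
proof -
  define n where "n = DIM('v)"
  define M where "M = max \<bar>lam 0\<bar> \<bar>lam (n - 1)\<bar>"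
  have n0: "0 < n" by (simp add: n_def)
  have lamM: "\<bar>lam i\<bar> \<le> M" if "i < n" for i
  proof -
    have "lam 0 \<le> lam i" using sorted[of 0 i] that by (simp add: n_def)
    moreover have "lam i \<le> lam (n - 1)" using sorted[of i "n - 1"] that n0 by (simp add: n_def)
    ultimately show ?thesis unfolding M_def by linarith
  qed
  have eb: "\<And>i j. i < n \<Longrightarrow> j < n \<Longrightarrow> e i \<bullet> e j = (if i = j then 1 else 0)"
    using eig_basis by (simp add: n_def)
  define E where "E = e ` {..<n}"
  have inj: "inj_on e {..<n}"
  proof (rule inj_onI)
    fix i j assume "i \<in> {..<n}" "j \<in> {..<n}" "e i = e j"
    then have "e i \<bullet> e j = 1" using eig_basis[of i i] by (simp add: n_def)
    then show "i = j" using eig_basis[of i j] \<open>i \<in> {..<n}\<close> \<open>j \<in> {..<n}\<close>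
      by (auto simp: n_def split: if_splits)
  qed
  have po: "pairwise orthogonal E"
    unfolding E_def pairwise_def orthogonal_def using eig_basis by (auto simp: n_def)
  have z: "0 \<notin> E"
  proof
    assume "0 \<in> E"
    then obtain i where "i < n" "e i = 0" by (auto simp: E_def)
    then show False using eig_basis[of i i] by (simp add: n_def)
  qed
  have ind: "independent E" using pairwise_orthogonal_independent[OF po z] .
  have cardE: "card E = dim (UNIV :: 'v set)" using inj by (simp add: E_def card_image n_def)
  have spanE: "UNIV \<subseteq> span E"
    using card_eq_dim[of E UNIV] cardE ind by (simp add: E_def)
  have expand: "x = (\<Sum>i<n. (x \<bullet> e i) *\<^sub>R e i)" for x
  proof -
    define p where "p = x - (\<Sum>i<n. (x \<bullet> e i) *\<^sub>R e i)"
    have "orthogonal p y" if "y \<in> E" for y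
    proof -
      obtain j where j: "j < n" "y = e j" using \<open>y \<in> E\<close> by (auto simp: E_def)
      have "(\<Sum>i<n. (x \<bullet> e i) *\<^sub>R e i) \<bullet> e j = (\<Sum>i<n. (x \<bullet> e i) * (e i \<bullet> e j))"
        by (simp add: inner_sum_left)
      also have "\<dots> = (\<Sum>i<n. if i = j then x \<bullet> e i else 0)"
        by (rule sum.cong) (simp_all add: eb j(1))
      also have "\<dots> = x \<bullet> e j" using j by simp
      finally show ?thesis by (simp add: orthogonal_def p_def inner_diff_left j(2))
    qed
    then have "orthogonal p p" using orthogonal_to_span spanE by blast
    then have "p = 0" by (simp add: orthogonal_def)
    then show ?thesis by (simp add: p_def)
  qed
  have bound: "norm (H x) \<le> M * norm x" for x
  proof -
    have Hx: "H x = (\<Sum>i<n. ((x \<bullet> e i) * lam i) *\<^sub>R e i)"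
      by (subst expand[of x]) (simp add: linear_sum[OF lin] linear_scale[OF lin] eig_eq n_def)
    have "(norm (H x))\<^sup>2 = (\<Sum>i<n. ((x \<bullet> e i) * lam i)\<^sup>2)"
      unfolding Hx by (rule orth_norm_sq) (simp add: eig_basis n_def)
    also have "\<dots> \<le> (\<Sum>i<n. M\<^sup>2 * (x \<bullet> e i)\<^sup>2)"
    proof (rule sum_mono)
      fix i assume "i \<in> {..<n}"
      then have "(lam i)\<^sup>2 \<le> M\<^sup>2" using lamM[of i] by (simp add: abs_le_square_iff[symmetric])
      then show "((x \<bullet> e i) * lam i)\<^sup>2 \<le> M\<^sup>2 * (x \<bullet> e i)\<^sup>2"
        by (simp add: power_mult_distrib mult_right_mono mult.commute)
    qed
    also have "\<dots> = M\<^sup>2 * (norm x)\<^sup>2"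
      using orth_norm_sq[of n e "\<lambda>i. x \<bullet> e i"] expand[of x]
      by (simp add: sum_distrib_left eig_basis n_def)
    finally have "(norm (H x))\<^sup>2 \<le> (M * norm x)\<^sup>2" by (simp add: power_mult_distrib)
    moreover have "0 \<le> M * norm x" by (simp add: M_def)
    ultimately show ?thesis using power2_le_imp_le by blast
  qed
  show ?thesis unfolding opb_def using lin selfadj bound by (simp add: M_def n_def)
qed


definition fro :: "'k set \<Rightarrow> ('k \<Rightarrow> 'v::real_normed_vector) \<Rightarrow> real" where
  "fro K X = sqrt (\<Sum>k\<in>K. (norm (X k))\<^sup>2)"

lemma fro_L2: "fro K X = L2_set (\<lambda>k. norm (X k)) K"
  by (simp add: fro_def L2_set_def)

lemma fro_add: "fro K (\<lambda>k. X k + Y k) \<le> fro K X + fro K Y"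
proof -
  have "L2_set (\<lambda>k. norm (X k + Y k)) K \<le> L2_set (\<lambda>k. norm (X k) + norm (Y k)) K"
    by (rule L2_set_mono) (auto simp: norm_triangle_ineq)
  also have "\<dots> \<le> L2_set (\<lambda>k. norm (X k)) K + L2_set (\<lambda>k. norm (Y k)) K"
    by (rule L2_set_triangle_ineq)
  finally show ?thesis by (simp add: fro_L2)
qed

lemma fro_diff: "fro K (\<lambda>k. X k - Y k) \<le> fro K X + fro K Y"
  using fro_add[of K X "\<lambda>k. - Y k"] by (simp add: fro_def)

lemma fro6: "fro K (\<lambda>k. (Z1 k + Z2 k + Z3 k) - (Z4 k + Z5 k + Z6 k))
   \<le> fro K Z1 + fro K Z2 + fro K Z3 + fro K Z4 + fro K Z5 + fro K Z6"
proof -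
  have "fro K (\<lambda>k. (Z1 k + Z2 k + Z3 k) - (Z4 k + Z5 k + Z6 k))
      \<le> fro K (\<lambda>k. Z1 k + Z2 k + Z3 k) + fro K (\<lambda>k. Z4 k + Z5 k + Z6 k)" by (rule fro_diff)
  moreover have "fro K (\<lambda>k. Z1 k + Z2 k + Z3 k) \<le> fro K Z1 + fro K Z2 + fro K Z3"
    using fro_add[of K "\<lambda>k. Z1 k + Z2 k" Z3] fro_add[of K Z1 Z2] by linarith
  moreover have "fro K (\<lambda>k. Z4 k + Z5 k + Z6 k) \<le> fro K Z4 + fro K Z5 + fro K Z6"
    using fro_add[of K "\<lambda>k. Z4 k + Z5 k" Z6] fro_add[of K Z4 Z5] by linarith
  ultimately show ?thesis by linarith
qed

lemma fro4: "fro K (\<lambda>k. (Z1 k + Z2 k) - (Z3 k + Z4 k))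
   \<le> fro K Z1 + fro K Z2 + fro K Z3 + fro K Z4"
  using fro_diff[of K "\<lambda>k. Z1 k + Z2 k" "\<lambda>k. Z3 k + Z4 k"] fro_add[of K Z1 Z2] fro_add[of K Z3 Z4]
  by linarith

lemma sq_fro:
  assumes "(\<Sum>k\<in>K. (norm (Z k))\<^sup>2) \<le> c\<^sup>2 * (\<Sum>i<N. (norm (D i))\<^sup>2)" "0 \<le> c"
  shows "fro K Z \<le> c * fro {..<N} D"
proof -
  have "fro K Z \<le> sqrt (c\<^sup>2 * (\<Sum>i<N. (norm (D i))\<^sup>2))"
    unfolding fro_def using assms(1) real_sqrt_le_mono by blast
  also have "\<dots> = c * fro {..<N} D" using assms(2) by (simp add: fro_def real_sqrt_mult)
  finally show ?thesis .
qed

lemma pt_fro: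
  assumes "\<And>k. k < N \<Longrightarrow> norm (Z k) \<le> c * norm (D k)" "0 \<le> c"
  shows "fro {..<N} Z \<le> c * fro {..<N} D"
  unfolding fro_def by (rule fro_bound) (use assms in auto)

lemma diff3:
  assumes "linear G"
  shows "(\<Sum>i<N. (X i \<bullet> a) *\<^sub>R G (X i)) - (\<Sum>i<N. (Y i \<bullet> b) *\<^sub>R G (Y i))
    = (\<Sum>i<N. ((X i - Y i) \<bullet> a) *\<^sub>R G (X i)) + (\<Sum>i<N. (Y i \<bullet> (a - b)) *\<^sub>R G (X i))
      + (\<Sum>i<N. (Y i \<bullet> b) *\<^sub>R G (X i - Y i))"
proof -
  have gd: "G (X i - Y i) = G (X i) - G (Y i)" for i by (simp add: linear_diff[OF assms])
  have "(\<Sum>i<N. ((X i - Y i) \<bullet> a) *\<^sub>R G (X i)) + (\<Sum>i<N. (Y i \<bullet> (a - b)) *\<^sub>R G (X i))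
      + (\<Sum>i<N. (Y i \<bullet> b) *\<^sub>R G (X i - Y i))
      = (\<Sum>i<N. ((X i - Y i) \<bullet> a) *\<^sub>R G (X i) + (Y i \<bullet> (a - b)) *\<^sub>R G (X i)
      + (Y i \<bullet> b) *\<^sub>R (G (X i) - G (Y i)))"
    by (simp only: gd sum.distrib)
  also have "\<dots> = (\<Sum>i<N. (X i \<bullet> a) *\<^sub>R G (X i) - (Y i \<bullet> b) *\<^sub>R G (Y i))"
    by (rule sum.cong) (simp_all add: inner_diff_left inner_diff_right scaleR_diff_left scaleR_diff_right)
  also have "\<dots> = (\<Sum>i<N. (X i \<bullet> a) *\<^sub>R G (X i)) - (\<Sum>i<N. (Y i \<bullet> b) *\<^sub>R G (Y i))"
    by (rule sum_subtractf)
  finally show ?thesis by simp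
qed

lemma swap4: "(a - b) - (c - d) = (a - c) - (b - (d::'a::ab_group_add))"
  by (simp add: algebra_simps)

lemma opA_split:
  assumes "\<And>x y. H x \<bullet> y = x \<bullet> H y"
  shows "opA H N U w = (\<Sum>i<N. (U i \<bullet> w) *\<^sub>R H (U i)) - (\<Sum>i<N. (U i \<bullet> H w) *\<^sub>R U i)"
  by (simp add: opA_def sum_subtractf assms)


theorem lemma4p4:
  fixes H :: "'v::euclidean_space \<Rightarrow> 'v"
    and lam :: "nat \<Rightarrow> real" and e :: "nat \<Rightarrow> 'v"
    and N :: nat and Vs :: "nat \<Rightarrow> 'v"
    and eta_a eta_b r \<alpha> L Lhat :: real
  assumes lin: "linear H"
    and selfadj: "\<And>x y. H x \<bullet> y = x \<bullet> H y"
    and eig_basis: "\<And>i j. i < DIM('v) \<Longrightarrow> j < DIM('v) \<Longrightarrow> e i \<bullet> e j = (if i = j then 1 else 0)"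
    and eig_eq: "\<And>i. i < DIM('v) \<Longrightarrow> H (e i) = lam i *\<^sub>R e i"
    and sorted: "\<And>i j. i \<le> j \<Longrightarrow> j < DIM('v) \<Longrightarrow> lam i \<le> lam j"
    and lam1_neg: "lam 0 < 0"
    and N_pos: "0 < N" and N_lt: "N < DIM('v)"
    and gap: "lam (N - 1) < lam N"
    and Vs_orth: "\<And>i j. i < N \<Longrightarrow> j < N \<Longrightarrow> Vs i \<bullet> Vs j = (if i = j then 1 else 0)"
    and Vs_eig: "\<And>i. i < N \<Longrightarrow> H (Vs i) = lam i *\<^sub>R Vs i"
    and eta_a_pos: "0 < eta_a" and eta_b_pos: "0 < eta_b"
    and r_def: "r = max eta_a eta_b"
    and alpha_def: "\<alpha> = Sup {sigma_max N U | U. tnorm N (\<lambda>k. U k - Vs k) \<le> r}"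
    and L_def: "L = 6 * \<alpha>\<^sup>2 * max \<bar>lam 0\<bar> \<bar>lam (DIM('v) - 1)\<bar>"
    and Lhat_def: "Lhat = 2 * L / (3 * \<alpha>)"
  shows "\<forall>Ui Uj. tnorm N (\<lambda>k. Ui k - Vs k) \<le> r \<longrightarrow> tnorm N (\<lambda>k. Uj k - Vs k) \<le> r \<longrightarrow>
           tnorm N (\<lambda>k. opA H N Ui (Ui k) - opA H N Uj (Uj k)) \<le> L * tnorm N (\<lambda>k. Ui k - Uj k) \<and>
           hs_norm (\<lambda>w. opA H N Ui w - opA H N Uj w) \<le> Lhat * tnorm N (\<lambda>k. Ui k - Uj k)"
proof -
  define M where "M = max \<bar>lam 0\<bar> \<bar>lam (DIM('v) - 1)\<bar>"
  have opH: "opb H M" unfolding M_def by (rule opb_H[OF lin selfadj eig_basis eig_eq sorted])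
  have opI: "opb (\<lambda>x::'v. x) 1" by (rule opb_id)
  have M0: "0 \<le> M" by (simp add: M_def)
  have linI: "linear (\<lambda>x::'v. x)" by (simp add: linear_id[unfolded id_def])
  have tn: "tnorm N X = fro {..<N} X" for X :: "nat \<Rightarrow> 'v" by (simp add: tnorm_def fro_def)
  define S where "S = {sigma_max N U | U. tnorm N (\<lambda>k. U k - Vs k) \<le> r}"
  have tVs: "tnorm N Vs = sqrt N"
  proof -
    have "(\<Sum>i<N. (norm (Vs i))\<^sup>2) = (\<Sum>i<N. 1)"
      by (rule sum.cong) (simp_all add: power2_norm_eq_inner Vs_orth)
    then show ?thesis by (simp add: tnorm_def)
  qed
  have tri: "tnorm N U \<le> tnorm N (\<lambda>k. U k - Vs k) + tnorm N Vs" for U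
    using fro_add[of "{..<N}" "\<lambda>k. U k - Vs k" Vs] by (simp add: tn)
  have bdd: "bdd_above S"
  proof (rule bdd_aboveI[of _ "r + sqrt N"])
    fix x assume "x \<in> S"
    then obtain U where U: "x = sigma_max N U" "tnorm N (\<lambda>k. U k - Vs k) \<le> r" by (auto simp: S_def)
    have "x \<le> tnorm N U" using sigma_props(2)[OF N_pos, of U] U(1) by simp
    also have "\<dots> \<le> r + sqrt N" using tri[of U] U(2) tVs by simp
    finally show "x \<le> r + sqrt N" .
  qed
  have inS: "sigma_max N U \<le> \<alpha>" if "tnorm N (\<lambda>k. U k - Vs k) \<le> r" for U
    unfolding alpha_def using that bdd by (intro cSup_upper) (auto simp: S_def)
  have r0: "0 \<le> r" using r_def eta_a_pos by simp
  have "tnorm N (\<lambda>k. Vs k - Vs k) \<le> r" using r0 by (simp add: tnorm_def)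
  then have sV: "sigma_max N Vs \<le> \<alpha>" by (rule inS)
  have "1 \<le> sigma_max N Vs"
  proof -
    define c :: "nat \<Rightarrow> real" where "c i = (if i = 0 then 1 else 0)" for i
    have "lc N Vs c = (\<Sum>i<N. if i = 0 then Vs i else 0)"
      unfolding lc_def c_def by (rule sum.cong) auto
    also have "\<dots> = Vs 0" using N_pos by simp
    finally have l: "lc N Vs c = Vs 0" .
    have "(\<Sum>i<N. (c i)\<^sup>2) = (\<Sum>i<N. if i = 0 then 1 else 0)"
      unfolding c_def by (rule sum.cong) auto
    also have "\<dots> = 1" using N_pos by simp
    finally have s: "(\<Sum>i<N. (c i)\<^sup>2) = 1" .
    have "norm (Vs 0) = 1" using Vs_orth[of 0 0] N_pos by (simp add: norm_eq_sqrt_inner)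
    moreover have "norm (lc N Vs c) \<le> sigma_max N Vs * sqrt (\<Sum>i<N. (c i)\<^sup>2)"
      using sigma_props(1)[OF N_pos, of Vs] unfolding sb_def by blast
    ultimately show ?thesis using l s by simp
  qed
  then have a1: "1 \<le> \<alpha>" using sV by simp
  then have a0: "0 \<le> \<alpha>" by simp
  have cobB: "cob Basis (\<lambda>b::'v. b) 1"
    unfolding cob_def by (simp add: norm_sq_basis inner_commute)
  show ?thesis
  proof (intro allI impI)
    fix Ui Uj :: "nat \<Rightarrow> 'v"
    assume bi: "tnorm N (\<lambda>k. Ui k - Vs k) \<le> r" and bj: "tnorm N (\<lambda>k. Uj k - Vs k) \<le> r"
    have sbi: "sb N Ui \<alpha>" using sb_mono[OF sigma_props(1)[OF N_pos] inS[OF bi]] .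
    have sbj: "sb N Uj \<alpha>" using sb_mono[OF sigma_props(1)[OF N_pos] inS[OF bj]] .
    have cobi: "cob {..<N} Ui \<alpha>" by (rule sb_cob[OF sbi a0])
    have cobj: "cob {..<N} Uj \<alpha>" by (rule sb_cob[OF sbj a0])
    define D where "D k = Ui k - Uj k" for k
    have tD: "tnorm N (\<lambda>k. Ui k - Uj k) = fro {..<N} D" by (simp add: tn D_def[abs_def])
    define Z1 where "Z1 k = (\<Sum>i<N. (D i \<bullet> Ui k) *\<^sub>R H (Ui i))" for k
    define Z2 where "Z2 k = (\<Sum>i<N. (Uj i \<bullet> D k) *\<^sub>R H (Ui i))" for k
    define Z3 where "Z3 k = (\<Sum>i<N. (Uj i \<bullet> Uj k) *\<^sub>R H (D i))" for k
    define Z4 where "Z4 k = (\<Sum>i<N. (D i \<bullet> H (Ui k)) *\<^sub>R Ui i)" for k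
    define Z5 where "Z5 k = (\<Sum>i<N. (Uj i \<bullet> H (D k)) *\<^sub>R Ui i)" for k
    define Z6 where "Z6 k = (\<Sum>i<N. (Uj i \<bullet> H (Uj k)) *\<^sub>R D i)" for k
    have eqk: "opA H N Ui (Ui k) - opA H N Uj (Uj k) = (Z1 k + Z2 k + Z3 k) - (Z4 k + Z5 k + Z6 k)" for k
    proof -
      have e1: "(\<Sum>i<N. (Ui i \<bullet> Ui k) *\<^sub>R H (Ui i)) - (\<Sum>i<N. (Uj i \<bullet> Uj k) *\<^sub>R H (Uj i))
          = Z1 k + Z2 k + Z3 k"
        unfolding Z1_def Z2_def Z3_def D_def by (rule diff3[OF lin])
      have e2: "(\<Sum>i<N. (Ui i \<bullet> H (Ui k)) *\<^sub>R Ui i) - (\<Sum>i<N. (Uj i \<bullet> H (Uj k)) *\<^sub>R Uj i)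
          = Z4 k + Z5 k + Z6 k"
        unfolding Z4_def Z5_def Z6_def D_def linear_diff[OF lin] by (rule diff3[OF linI])
      have "opA H N Ui (Ui k) - opA H N Uj (Uj k) =
        ((\<Sum>i<N. (Ui i \<bullet> Ui k) *\<^sub>R H (Ui i)) - (\<Sum>i<N. (Uj i \<bullet> Uj k) *\<^sub>R H (Uj i)))
        - ((\<Sum>i<N. (Ui i \<bullet> H (Ui k)) *\<^sub>R Ui i) - (\<Sum>i<N. (Uj i \<bullet> H (Uj k)) *\<^sub>R Uj i))"
        unfolding opA_split[OF selfadj] by (rule swap4)
      then show ?thesis by (simp only: e1 e2)
    qed
    have b1: "fro {..<N} Z1 \<le> (M * \<alpha> * \<alpha> * 1) * fro {..<N} D"
      using T2[OF opI opH sbi a0 cobi a0, of D] M0 a0 by (intro sq_fro) (simp_all add: Z1_def)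
    have b2: "fro {..<N} Z2 \<le> (M * \<alpha> * \<alpha> * 1) * fro {..<N} D"
      using T3[OF opI opH sbj sbi a0 a0] M0 a0 by (intro pt_fro) (simp_all add: Z2_def)
    have b3: "fro {..<N} Z3 \<le> (M * \<alpha> * \<alpha> * 1) * fro {..<N} D"
      using T1[OF opI opH sbj a0 cobj a0, of D] M0 a0 by (intro sq_fro) (simp_all add: Z3_def)
    have b4: "fro {..<N} Z4 \<le> (1 * \<alpha> * \<alpha> * M) * fro {..<N} D"
      using T2[OF opH opI sbi a0 cobi a0, of D] M0 a0 by (intro sq_fro) (simp_all add: Z4_def)
    have b5: "fro {..<N} Z5 \<le> (1 * \<alpha> * \<alpha> * M) * fro {..<N} D"
      using T3[OF opH opI sbj sbi a0 a0] M0 a0 by (intro pt_fro) (simp_all add: Z5_def)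
    have b6: "fro {..<N} Z6 \<le> (1 * \<alpha> * \<alpha> * M) * fro {..<N} D"
      using T1[OF opH opI sbj a0 cobj a0, of D] M0 a0 by (intro sq_fro) (simp_all add: Z6_def)
    have "tnorm N (\<lambda>k. opA H N Ui (Ui k) - opA H N Uj (Uj k))
        = fro {..<N} (\<lambda>k. (Z1 k + Z2 k + Z3 k) - (Z4 k + Z5 k + Z6 k))" by (simp add: tn eqk)
    also have "\<dots> \<le> fro {..<N} Z1 + fro {..<N} Z2 + fro {..<N} Z3 + fro {..<N} Z4 + fro {..<N} Z5 + fro {..<N} Z6"
      by (rule fro6)
    also have "\<dots> \<le> 6 * (\<alpha>\<^sup>2 * M) * fro {..<N} D"
      using b1 b2 b3 b4 b5 b6 by (simp add: power2_eq_square mult_ac)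
    also have "\<dots> = L * tnorm N (\<lambda>k. Ui k - Uj k)" by (simp add: L_def M_def tD mult_ac)
    finally have I1: "tnorm N (\<lambda>k. opA H N Ui (Ui k) - opA H N Uj (Uj k)) \<le> L * tnorm N (\<lambda>k. Ui k - Uj k)" .
    define Y1 where "Y1 w = (\<Sum>i<N. (D i \<bullet> w) *\<^sub>R H (Ui i))" for w
    define Y2 where "Y2 w = (\<Sum>i<N. (Uj i \<bullet> w) *\<^sub>R H (D i))" for w
    define Y3 where "Y3 w = (\<Sum>i<N. (D i \<bullet> H w) *\<^sub>R Ui i)" for w
    define Y4 where "Y4 w = (\<Sum>i<N. (Uj i \<bullet> H w) *\<^sub>R D i)" for w
    have eqw: "opA H N Ui w - opA H N Uj w = (Y1 w + Y2 w) - (Y3 w + Y4 w)" for w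
    proof -
      have e1: "(\<Sum>i<N. (Ui i \<bullet> w) *\<^sub>R H (Ui i)) - (\<Sum>i<N. (Uj i \<bullet> w) *\<^sub>R H (Uj i))
          = Y1 w + Y2 w"
        using diff3[OF lin, where X=Ui and a=w and Y=Uj and b=w] unfolding Y1_def Y2_def D_def by simp
      have e2: "(\<Sum>i<N. (Ui i \<bullet> H w) *\<^sub>R Ui i) - (\<Sum>i<N. (Uj i \<bullet> H w) *\<^sub>R Uj i)
          = Y3 w + Y4 w"
        using diff3[OF linI, where X=Ui and a="H w" and Y=Uj and b="H w"] unfolding Y3_def Y4_def D_def by simp
      have "opA H N Ui w - opA H N Uj w =
        ((\<Sum>i<N. (Ui i \<bullet> w) *\<^sub>R H (Ui i)) - (\<Sum>i<N. (Uj i \<bullet> w) *\<^sub>R H (Uj i)))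
        - ((\<Sum>i<N. (Ui i \<bullet> H w) *\<^sub>R Ui i) - (\<Sum>i<N. (Uj i \<bullet> H w) *\<^sub>R Uj i))"
        unfolding opA_split[OF selfadj] by (rule swap4)
      then show ?thesis by (simp only: e1 e2)
    qed
    have c1: "fro Basis Y1 \<le> (M * \<alpha> * 1 * 1) * fro {..<N} D"
      using T2[OF opI opH sbi a0 cobB, of D] M0 a0 by (intro sq_fro) (simp_all add: Y1_def)
    have c2: "fro Basis Y2 \<le> (M * \<alpha> * 1 * 1) * fro {..<N} D"
      using T1[OF opI opH sbj a0 cobB, of D] M0 a0 by (intro sq_fro) (simp_all add: Y2_def)
    have c3: "fro Basis Y3 \<le> (1 * \<alpha> * 1 * M) * fro {..<N} D"
      using T2[OF opH opI sbi a0 cobB, of D] M0 a0 by (intro sq_fro) (simp_all add: Y3_def)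
    have c4: "fro Basis Y4 \<le> (1 * \<alpha> * 1 * M) * fro {..<N} D"
      using T1[OF opH opI sbj a0 cobB, of D] M0 a0 by (intro sq_fro) (simp_all add: Y4_def)
    have "hs_norm (\<lambda>w. opA H N Ui w - opA H N Uj w) = fro Basis (\<lambda>w. (Y1 w + Y2 w) - (Y3 w + Y4 w))"
      by (simp add: hs_norm_def fro_def eqw)
    also have "\<dots> \<le> fro Basis Y1 + fro Basis Y2 + fro Basis Y3 + fro Basis Y4" by (rule fro4)
    also have "\<dots> \<le> 4 * (\<alpha> * M) * fro {..<N} D"
      using c1 c2 c3 c4 by (simp add: mult_ac)
    also have "4 * (\<alpha> * M) = Lhat"
      using a1 by (simp add: Lhat_def L_def M_def power2_eq_square field_simps)
    finally have I2: "hs_norm (\<lambda>w. opA H N Ui w - opA H N Uj w) \<le> Lhat * tnorm N (\<lambda>k. Ui k - Uj k)"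
      by (simp add: tD)
    show "tnorm N (\<lambda>k. opA H N Ui (Ui k) - opA H N Uj (Uj k)) \<le> L * tnorm N (\<lambda>k. Ui k - Uj k) \<and>
           hs_norm (\<lambda>w. opA H N Ui w - opA H N Uj w) \<le> Lhat * tnorm N (\<lambda>k. Ui k - Uj k)"
      using I1 I2 by blast
  qed
qed

end
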